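(* For every integer $m\ge1$ there exist $C_m>0$ and $\theta_m\in(0,\pi/2)$ such that for all $\theta\in(0,\theta_m]$ the operator $U_{m,\theta}$ is unitary and $$\|M_{m,\theta}-U_{m,\theta}\|_F\le C_m\,\theta^m .$$
   Context: $\|A\|_F=\sqrt{\mathrm{tr}(A^*A)}$ is the Frobenius norm. $M_{m,\theta}$ is the $m$-qubit operator with $M_{m,\theta}|x_1\cdots x_m\rangle=\bigotimes_{j=1}^m e^{-i\theta x_{j-1}X}|x_j\rangle$ (indices mod $m$, $x_0=x_m$, $X$ Pauli-$X$). For $x\in\{0,1\}^m$ let $\bar x$ be its complement and $\gamma_x=\langle\bar x|M_{m,\theta}^\dagger M_{m,\theta}|x\rangle$. $U_{m,\theta}$ is the $m$-qubit operator defined on basis states by $U_{m,\theta}|x\rangle=M_{m,\theta}|x\rangle$ if $x_1=0$, and $U_{m,\theta}|x\rangle=\big(M_{m,\theta}|x\rangle-\gamma_xM_{m,\theta}|\bar x\rangle\big)/\sqrt{1-|\gamma_x|^2}$ if $x_1=1$. *)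

theory Defs
  imports "HOL-Analysis.Analysis"
begin

text \<open>Computational basis of m qubits: bit strings x = x_1 ... x_m, represented as
  boolean lists of length m (list position k, 0-based, is qubit x_(k+1); True = 1).
  An m-qubit operator A is represented by its matrix entries A y x = <y|A|x>.\<close>

definition bits :: "nat \<Rightarrow> bool list set" where
  "bits m = {xs. length xs = m}"

definition compl_bits :: "bool list \<Rightarrow> bool list" where
  "compl_bits x = map Not x"

text \<open>Matrix entries of exp(-i t X) for Pauli X: exp(-i t X) = cos t I - i sin t X.
  The rotation angle is t = theta * c with c the control bit.\<close>
definition rotX :: "real \<Rightarrow> bool \<Rightarrow> bool \<Rightarrow> complex" where
  "rotX t y x = (if y = x then complex_of_real (cos t) else - \<i> * complex_of_real (sin t))"

definition Mop :: "nat \<Rightarrow> real \<Rightarrow> bool list \<Rightarrow> bool list \<Rightarrow> complex" where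
  "Mop m \<theta> y x = (\<Prod>k<m. rotX (\<theta> * (if x ! ((k + m - 1) mod m) then 1 else 0)) (y ! k) (x ! k))"

definition gam :: "nat \<Rightarrow> real \<Rightarrow> bool list \<Rightarrow> complex" where
  "gam m \<theta> x = (\<Sum>y\<in>bits m. cnj (Mop m \<theta> y (compl_bits x)) * Mop m \<theta> y x)"

definition Uop :: "nat \<Rightarrow> real \<Rightarrow> bool list \<Rightarrow> bool list \<Rightarrow> complex" where
  "Uop m \<theta> y x =
     (if \<not> x ! 0 then Mop m \<theta> y x
      else (Mop m \<theta> y x - gam m \<theta> x * Mop m \<theta> y (compl_bits x))
             / complex_of_real (sqrt (1 - (cmod (gam m \<theta> x))\<^sup>2)))"

definition unitary_op :: "nat \<Rightarrow> (bool list \<Rightarrow> bool list \<Rightarrow> complex) \<Rightarrow> bool" where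
  "unitary_op m A \<longleftrightarrow>
     (\<forall>x\<in>bits m. \<forall>x'\<in>bits m.
        (\<Sum>y\<in>bits m. cnj (A y x) * A y x') = (if x = x' then 1 else 0) \<and>
        (\<Sum>y\<in>bits m. A x y * cnj (A x' y)) = (if x = x' then 1 else 0))"

definition frob :: "nat \<Rightarrow> (bool list \<Rightarrow> bool list \<Rightarrow> complex) \<Rightarrow> real" where
  "frob m A = sqrt (\<Sum>x\<in>bits m. \<Sum>y\<in>bits m. (cmod (A y x))\<^sup>2)"

end

theory Submission
  imports Defs "Jordan_Normal_Form.Determinant"
begin

lemma cols_to_rows:
  fixes A :: "'a \<Rightarrow> 'a \<Rightarrow> complex"
  assumes fin: "finite S"
    and cols: "\<forall>x\<in>S. \<forall>x'\<in>S. (\<Sum>y\<in>S. cnj (A y x) * A y x') = (if x = x' then 1 else 0)"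
  shows "\<forall>x\<in>S. \<forall>x'\<in>S. (\<Sum>y\<in>S. A x y * cnj (A x' y)) = (if x = x' then 1 else 0)"
proof -
  define n where "n = card S"
  obtain e where e: "bij_betw e {..<n} S" using ex_bij_betw_nat_finite[OF fin] n_def
    by (metis lessThan_atLeast0)
  define A' where "A' = mat n n (\<lambda>(i,j). A (e i) (e j))"
  define B where "B = mat n n (\<lambda>(i,j). cnj (A (e j) (e i)))"
  have eS: "i < n \<Longrightarrow> e i \<in> S" for i using e by (auto simp: bij_betw_def)
  have einj: "i < n \<Longrightarrow> j < n \<Longrightarrow> e i = e j \<longleftrightarrow> i = j" for i j
    using e by (auto simp: bij_betw_def inj_on_def)
  have reidx: "(\<Sum>y\<in>S. f y) = (\<Sum>k<n. f (e k))" for f :: "'a \<Rightarrow> complex"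
    using sum.reindex_bij_betw[OF e, of f] by simp
  have A'c: "A' \<in> carrier_mat n n" and Bc: "B \<in> carrier_mat n n" by (auto simp: A'_def B_def)
  have "B * A' = 1\<^sub>m n"
  proof (rule eq_matI)
    fix i j assume ij: "i < dim_row (1\<^sub>m n)" "j < dim_col (1\<^sub>m n)"
    hence ij': "i < n" "j < n" by auto
    have "(B * A') $$ (i, j) = (\<Sum>k<n. cnj (A (e k) (e i)) * A (e k) (e j))"
      using ij' by (auto simp: B_def A'_def scalar_prod_def times_mat_def lessThan_atLeast0 intro!: sum.cong)
    also have "\<dots> = (\<Sum>y\<in>S. cnj (A y (e i)) * A y (e j))" by (rule reidx[symmetric])
    also have "\<dots> = (if i = j then 1 else 0)" using cols eS ij' einj by simp
    finally show "(B * A') $$ (i, j) = 1\<^sub>m n $$ (i, j)" using ij' by simp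
  qed (auto simp: B_def A'_def)
  hence AB: "A' * B = 1\<^sub>m n" using mat_mult_left_right_inverse[OF Bc A'c] by simp
  show ?thesis
  proof (intro ballI)
    fix x x' assume x: "x \<in> S" "x' \<in> S"
    obtain i where i: "i < n" "x = e i" using x e by (metis bij_betw_iff_bijections lessThan_iff)
    obtain j where j: "j < n" "x' = e j" using x e by (metis bij_betw_iff_bijections lessThan_iff)
    have "(\<Sum>y\<in>S. A x y * cnj (A x' y)) = (\<Sum>k<n. A (e i) (e k) * cnj (A (e j) (e k)))"
      using reidx i j by simp
    also have "\<dots> = (A' * B) $$ (i, j)"
      using i j by (auto simp: B_def A'_def scalar_prod_def times_mat_def lessThan_atLeast0 intro!: sum.cong)
    also have "\<dots> = (if x = x' then 1 else 0)" using AB i j einj by simp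
    finally show "(\<Sum>y\<in>S. A x y * cnj (A x' y)) = (if x = x' then 1 else 0)" .
  qed
qed

lemma bits_Suc: "bits (Suc m) = (\<lambda>(b, ys). b # ys) ` (UNIV \<times> bits m)"
  unfolding bits_def
  by (auto simp: image_iff length_Suc_conv)

lemma finite_bits: "finite (bits m)"
proof (induction m)
  case 0 then show ?case by (simp add: bits_def)
next
  case (Suc m) then show ?case by (simp add: bits_Suc)
qed

lemma sum_prod_bits:
  "(\<Sum>y\<in>bits m. \<Prod>k<m. f k (y ! k)) = (\<Prod>k<m. (f k False + f k True :: complex))"
proof (induction m arbitrary: f)
  case 0 then show ?case by (simp add: bits_def)
next
  case (Suc m)
  have inj: "inj_on (\<lambda>(b, ys). b # ys) (UNIV \<times> bits m)" by (auto simp: inj_on_def)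
  have "(\<Sum>y\<in>bits (Suc m). \<Prod>k<Suc m. f k (y ! k))
      = (\<Sum>(b,ys)\<in>UNIV \<times> bits m. \<Prod>k<Suc m. f k ((b # ys) ! k))"
    unfolding bits_Suc by (subst sum.reindex[OF inj]) (simp add: case_prod_unfold)
  also have "\<dots> = (\<Sum>b\<in>UNIV. \<Sum>ys\<in>bits m. f 0 b * (\<Prod>k<m. f (Suc k) (ys ! k)))"
    by (subst sum.cartesian_product[symmetric]) (simp only: prod.lessThan_Suc_shift nth_Cons_0 nth_Cons_Suc)
  also have "\<dots> = (\<Sum>b\<in>UNIV. f 0 b * (\<Prod>k<m. (f (Suc k) False + f (Suc k) True)))"
    by (simp add: sum_distrib_left[symmetric] Suc.IH[of "\<lambda>k. f (Suc k)"])
  also have "\<dots> = (\<Prod>k<Suc m. (f k False + f k True))"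
    by (simp only: prod.lessThan_Suc_shift UNIV_bool) (simp add: algebra_simps)
  finally show ?case .
qed

lemma rot_factor:
  "(\<Sum>b\<in>UNIV. cnj (rotX a b u) * rotX a' b v) = rotX (a' - a) u v"
  by (cases u; cases v) (auto simp: UNIV_bool rotX_def cos_diff sin_diff algebra_simps complex_eq_iff)

definition G :: "nat \<Rightarrow> real \<Rightarrow> bool list \<Rightarrow> bool list \<Rightarrow> complex" where
  "G m \<theta> x x' = (\<Sum>y\<in>bits m. cnj (Mop m \<theta> y x) * Mop m \<theta> y x')"

definition cb :: "nat \<Rightarrow> bool list \<Rightarrow> nat \<Rightarrow> real" where
  "cb m x k = (if x ! ((k + m - 1) mod m) then 1 else 0)"

lemma G_prod: "G m \<theta> x x' = (\<Prod>k<m. rotX (\<theta> * cb m x' k - \<theta> * cb m x k) (x ! k) (x' ! k))"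
proof -
  have "G m \<theta> x x' = (\<Sum>y\<in>bits m. \<Prod>k<m. cnj (rotX (\<theta> * cb m x k) (y ! k) (x ! k)) * rotX (\<theta> * cb m x' k) (y ! k) (x' ! k))"
    unfolding G_def Mop_def cb_def by (simp add: cnj_prod prod.distrib)
  also have "\<dots> = (\<Prod>k<m. (\<Sum>b\<in>UNIV. cnj (rotX (\<theta> * cb m x k) b (x ! k)) * rotX (\<theta> * cb m x' k) b (x' ! k)))"
    by (subst sum_prod_bits) (simp add: UNIV_bool add.commute)
  also have "\<dots> = (\<Prod>k<m. rotX (\<theta> * cb m x' k - \<theta> * cb m x k) (x ! k) (x' ! k))"
    by (simp add: rot_factor)
  finally show ?thesis .
qed

lemma G_cnj: "G m \<theta> x' x = cnj (G m \<theta> x x')"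
  unfolding G_def by (simp add: mult.commute)

lemma G_diag: "G m \<theta> x x = 1"
  unfolding G_prod by (simp add: rotX_def)

lemma compl_nth: "k < length x \<Longrightarrow> compl_bits x ! k = (\<not> x ! k)"
  by (simp add: compl_bits_def)

lemma key_index:
  assumes "length x = m" "length x' = m" "x \<noteq> x'" "x' \<noteq> compl_bits x"
  shows "\<exists>k<m. x ! k \<noteq> x' ! k \<and> x ! ((k + m - 1) mod m) = x' ! ((k + m - 1) mod m)"
proof (rule ccontr)
  assume H: "\<not> ?thesis"
  have "\<exists>k1<m. x ! k1 = x' ! k1"
  proof (rule ccontr)
    assume "\<not> (\<exists>k1<m. x ! k1 = x' ! k1)"
    hence "x' = compl_bits x" using assms(1,2) by (intro nth_equalityI) (auto simp: compl_bits_def)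
    thus False using assms(4) by simp
  qed
  then obtain k1 where k1: "k1 < m" "x ! k1 = x' ! k1" by blast
  have "\<exists>k0<m. x ! k0 \<noteq> x' ! k0"
  proof (rule ccontr)
    assume "\<not> (\<exists>k0<m. x ! k0 \<noteq> x' ! k0)"
    hence "x = x'" using assms(1,2) by (intro nth_equalityI) auto
    thus False using assms(3) by simp
  qed
  then obtain k0 where k0: "k0 < m" "x ! k0 \<noteq> x' ! k0" by blast
  have m0: "m > 0" using k0 by auto
  have step: "k < m \<Longrightarrow> x ! ((k + m - 1) mod m) = x' ! ((k + m - 1) mod m) \<Longrightarrow> x ! k = x' ! k" for k
    using H by blast
  have all: "x ! ((k1 + j) mod m) = x' ! ((k1 + j) mod m)" for j
  proof (induction j)
    case 0 then show ?case using k1 by simp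
  next
    case (Suc j)
    let ?k = "(k1 + Suc j) mod m"
    have "(?k + m - 1) mod m = (k1 + j) mod m"
    proof -
      have "(?k + m - 1) mod m = (?k + (m - 1)) mod m" using m0 by simp
      also have "\<dots> = (k1 + Suc j + (m - 1)) mod m" by (simp add: mod_add_left_eq)
      also have "k1 + Suc j + (m - 1) = (k1 + j) + m" using m0 by simp
      finally show ?thesis by simp
    qed
    then show ?case using step[of ?k] Suc m0 by simp
  qed
  have "x ! ((k1 + (k0 + m - k1)) mod m) = x' ! ((k1 + (k0 + m - k1)) mod m)" by (rule all)
  moreover have "(k1 + (k0 + m - k1)) mod m = k0" using k0 k1 by simp
  ultimately show False using k0 by simp
qed

lemma G_off:
  assumes "length x = m" "length x' = m" "x \<noteq> x'" "x' \<noteq> compl_bits x"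
  shows "G m \<theta> x x' = 0"
proof -
  obtain k where k: "k < m" "x ! k \<noteq> x' ! k" "x ! ((k + m - 1) mod m) = x' ! ((k + m - 1) mod m)"
    using key_index[OF assms] by blast
  have "rotX (\<theta> * cb m x' k - \<theta> * cb m x k) (x ! k) (x' ! k) = 0"
    using k by (simp add: rotX_def cb_def)
  then show ?thesis unfolding G_prod using k(1) by (intro prod_zero) auto
qed

lemma G_compl_norm:
  assumes "length x = m"
  shows "cmod (G m \<theta> x (compl_bits x)) = \<bar>sin \<theta>\<bar> ^ m"
proof -
  have m0: "k < m \<Longrightarrow> (k + m - 1) mod m < m" for k by simp
  have "cmod (G m \<theta> x (compl_bits x)) = (\<Prod>k<m. cmod (rotX (\<theta> * cb m (compl_bits x) k - \<theta> * cb m x k) (x ! k) (compl_bits x ! k)))"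
    unfolding G_prod by (simp add: prod_norm)
  also have "\<dots> = (\<Prod>k<m. \<bar>sin \<theta>\<bar>)"
  proof (rule prod.cong[OF refl])
    fix k assume "k \<in> {..<m}"
    then have k: "k < m" by simp
    then have i: "(k + m - 1) mod m < length x" using assms by simp
    show "cmod (rotX (\<theta> * cb m (compl_bits x) k - \<theta> * cb m x k) (x ! k) (compl_bits x ! k)) = \<bar>sin \<theta>\<bar>"
      using k assms compl_nth[OF i] by (auto simp: rotX_def cb_def compl_nth norm_mult)
  qed
  finally show ?thesis by simp
qed

definition sc :: "nat \<Rightarrow> real \<Rightarrow> bool list \<Rightarrow> complex" where
  "sc m \<theta> x = complex_of_real (sqrt (1 - (cmod (gam m \<theta> x))\<^sup>2))"

definition al :: "nat \<Rightarrow> real \<Rightarrow> bool list \<Rightarrow> complex" where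
  "al m \<theta> x = (if \<not> x ! 0 then 1 else 1 / sc m \<theta> x)"

definition be :: "nat \<Rightarrow> real \<Rightarrow> bool list \<Rightarrow> complex" where
  "be m \<theta> x = (if \<not> x ! 0 then 0 else - gam m \<theta> x / sc m \<theta> x)"

lemma U_dec: "Uop m \<theta> y x = al m \<theta> x * Mop m \<theta> y x + be m \<theta> x * Mop m \<theta> y (compl_bits x)"
  unfolding Uop_def al_def be_def sc_def by (simp add: diff_divide_distrib)

lemma gam_G: "gam m \<theta> x = G m \<theta> (compl_bits x) x"
  unfolding gam_def G_def by simp

lemma col_ip:
  "(\<Sum>y\<in>bits m. cnj (Uop m \<theta> y x) * Uop m \<theta> y x') =
     cnj (al m \<theta> x) * al m \<theta> x' * G m \<theta> x x' + cnj (al m \<theta> x) * be m \<theta> x' * G m \<theta> x (compl_bits x')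
   + cnj (be m \<theta> x) * al m \<theta> x' * G m \<theta> (compl_bits x) x' + cnj (be m \<theta> x) * be m \<theta> x' * G m \<theta> (compl_bits x) (compl_bits x')"
proof -
  let ?a = "al m \<theta> x" and ?b = "be m \<theta> x" and ?a' = "al m \<theta> x'" and ?b' = "be m \<theta> x'"
  let ?M = "Mop m \<theta>"
  have "(\<Sum>y\<in>bits m. cnj (Uop m \<theta> y x) * Uop m \<theta> y x') =
     (\<Sum>y\<in>bits m. cnj ?a * ?a' * (cnj (?M y x) * ?M y x') + cnj ?a * ?b' * (cnj (?M y x) * ?M y (compl_bits x'))
        + cnj ?b * ?a' * (cnj (?M y (compl_bits x)) * ?M y x') + cnj ?b * ?b' * (cnj (?M y (compl_bits x)) * ?M y (compl_bits x')))"
    unfolding U_dec by (intro sum.cong refl) (simp add: algebra_simps)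
  also have "\<dots> = cnj ?a * ?a' * G m \<theta> x x' + cnj ?a * ?b' * G m \<theta> x (compl_bits x')
   + cnj ?b * ?a' * G m \<theta> (compl_bits x) x' + cnj ?b * ?b' * G m \<theta> (compl_bits x) (compl_bits x')"
    unfolding sum.distrib G_def sum_distrib_left[symmetric] ..
  finally show ?thesis .
qed

lemma compl_compl[simp]: "compl_bits (compl_bits x) = x"
  by (simp add: compl_bits_def comp_def)

lemma compl_inj[simp]: "compl_bits x = compl_bits x' \<longleftrightarrow> x = x'"
  by (metis compl_compl)

lemma compl_len[simp]: "length (compl_bits x) = length x"
  by (simp add: compl_bits_def)

lemma compl_bits_mem: "x \<in> bits m \<Longrightarrow> compl_bits x \<in> bits m"
  by (simp add: bits_def)

lemma compl_0: "0 < length x \<Longrightarrow> compl_bits x ! 0 = (\<not> x ! 0)"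
  by (simp add: compl_bits_def)

lemma norm_one_alg:
  fixes g :: complex
  assumes "cmod g < 1"
  defines "S \<equiv> complex_of_real (sqrt (1 - (cmod g)\<^sup>2))"
  shows "cnj (1 / S) * (1 / S) + cnj (1 / S) * (- g / S) * cnj g + cnj (- g / S) * (1 / S) * g
          + cnj (- g / S) * (- g / S) = 1"
proof -
  have pos: "0 < 1 - (cmod g)\<^sup>2" using assms(1) norm_ge_zero[of g]
    by (simp add: abs_square_less_1)
  have cS: "cnj S = S" unfolding S_def by simp
  have S2: "S * S = complex_of_real (1 - (cmod g)\<^sup>2)" unfolding S_def
    using pos by (simp flip: of_real_mult)
  have Snz: "S \<noteq> 0" unfolding S_def using pos by simp
  have gg: "g * cnj g = complex_of_real ((cmod g)\<^sup>2)" by (rule complex_norm_square[symmetric])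
  have e1: "cnj (1 / S) * (1 / S) + cnj (1 / S) * (- g / S) * cnj g + cnj (- g / S) * (1 / S) * g
          + cnj (- g / S) * (- g / S) = (1 - g * cnj g) / (S * S)"
    using Snz by (simp add: cS field_simps)
  have "1 - g * cnj g = S * S" using S2 gg by simp
  hence "(1 - g * cnj g) / (S * S) = 1" using Snz by simp
  with e1 show ?thesis by simp
qed

lemma G_compl_r: "G m \<theta> a (compl_bits a) = cnj (gam m \<theta> a)"
  by (simp add: gam_G G_cnj[of m \<theta> a "compl_bits a"])

lemma cols_orth:
  assumes m1: "m \<ge> 1" and gl: "\<forall>x\<in>bits m. cmod (gam m \<theta> x) < 1"
  shows "\<forall>x\<in>bits m. \<forall>x'\<in>bits m.
     (\<Sum>y\<in>bits m. cnj (Uop m \<theta> y x) * Uop m \<theta> y x') = (if x = x' then 1 else 0)"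
proof (intro ballI)
  fix x x' assume xb: "x \<in> bits m" and xb': "x' \<in> bits m"
  have lx: "length x = m" and lx': "length x' = m" using xb xb' by (auto simp: bits_def)
  have c0: "compl_bits x ! 0 = (\<not> x ! 0)" "compl_bits x' ! 0 = (\<not> x' ! 0)"
    using lx lx' m1 by (auto intro!: compl_0)
  have Goff: "G m \<theta> a b = 0" if "length a = m" "length b = m" "a \<noteq> b" "b \<noteq> compl_bits a" for a b
    using G_off that by blast
  note ip = col_ip[of m \<theta> x x']
  show "(\<Sum>y\<in>bits m. cnj (Uop m \<theta> y x) * Uop m \<theta> y x') = (if x = x' then 1 else 0)"
  proof (cases "x ! 0")
    case False note x0 = this
    show ?thesis
    proof (cases "x' ! 0")
      case False
      have "x' \<noteq> compl_bits x" using c0 x0 False by auto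
      then show ?thesis using ip x0 False Goff[OF lx lx'] by (simp add: al_def be_def G_diag)
    next
      case True
      have ne: "x \<noteq> x'" using x0 True by auto
      show ?thesis
      proof (cases "x' = compl_bits x")
        case True
        have "G m \<theta> x x' = gam m \<theta> x'" using True by (simp add: gam_G)
        then show ?thesis using ip x0 \<open>x' ! 0\<close> ne True by (simp add: al_def be_def G_diag)
      next
        case False
        have z1: "G m \<theta> x x' = 0" using Goff[OF lx lx' ne False] .
        have z2: "G m \<theta> x (compl_bits x') = 0"
          using False ne by (intro Goff) (auto simp: lx lx')
        show ?thesis using ip x0 z1 z2 ne by (simp add: al_def be_def)
      qed
    qed
  next
    case True note x0 = this
    show ?thesis
    proof (cases "x' ! 0")
      case False
      have ne: "x \<noteq> x'" using x0 False by auto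
      show ?thesis
      proof (cases "x' = compl_bits x")
        case True
        then show ?thesis using ip x0 \<open>\<not> x' ! 0\<close> ne
          by (simp add: al_def be_def G_diag G_compl_r)
      next
        case False
        have z1: "G m \<theta> x x' = 0" using Goff[OF lx lx' ne False] .
        have z2: "G m \<theta> (compl_bits x) x' = 0"
          using False ne by (intro Goff) (auto simp: lx lx')
        show ?thesis using ip x0 \<open>\<not> x' ! 0\<close> z1 z2 ne by (simp add: al_def be_def)
      qed
    next
      case True note x0' = this
      have nc: "x' \<noteq> compl_bits x" using c0 x0 x0' by auto
      show ?thesis
      proof (cases "x = x'")
        case True
        have "cmod (gam m \<theta> x) < 1" using gl xb by blast
        from norm_one_alg[OF this]
        show ?thesis using ip x0 True
          by (simp add: al_def be_def G_diag G_compl_r gam_G[symmetric] sc_def)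
      next
        case False
        have z1: "G m \<theta> x x' = 0" using Goff[OF lx lx' False nc] .
        have z2: "G m \<theta> x (compl_bits x') = 0"
          using False c0 x0 x0' by (intro Goff) (auto simp: lx lx')
        have z3: "G m \<theta> (compl_bits x) x' = 0"
          using False c0 x0 x0' by (intro Goff) (auto simp: lx lx')
        have z4: "G m \<theta> (compl_bits x) (compl_bits x') = 0"
          using False c0 x0 x0' by (intro Goff) (auto simp: lx lx')
        show ?thesis using ip z1 z2 z3 z4 False by simp
      qed
    qed
  qed
qed

lemma real_bound:
  fixes g s :: real
  assumes g0: "0 \<le> g" and g2: "g\<^sup>2 \<le> 1/2" and sd: "s = sqrt (1 - g\<^sup>2)"
  shows "2 * (1 - 1/s)\<^sup>2 + 2 * (g/s)\<^sup>2 \<le> 8 * g\<^sup>2"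
proof -
  have s2: "s\<^sup>2 = 1 - g\<^sup>2" using sd g2 by simp
  have s0: "s > 0" using sd g2 by simp
  have s1: "s \<le> 1" using sd g0 by simp
  have sh: "s\<^sup>2 \<ge> 1/2" using s2 g2 by simp
  have "s\<^sup>2 \<le> s" using s0 s1 by (simp add: power2_eq_square mult_le_cancel_right1)
  hence a: "1 - s \<le> g\<^sup>2" using s2 by simp
  have a0: "0 \<le> 1 - s" using s1 by simp
  have g1: "g\<^sup>2 \<le> 1" using g2 by simp
  have "(1 - s)\<^sup>2 \<le> (g\<^sup>2)\<^sup>2" using a a0 by (rule power_mono)
  also have "\<dots> = g\<^sup>2 * g\<^sup>2" by (simp add: power2_eq_square)
  also have "\<dots> \<le> g\<^sup>2" using g1 by (intro mult_right_le_one_le) auto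
  finally have b: "(1 - s)\<^sup>2 \<le> g\<^sup>2" .
  have "2 * (1 - 1/s)\<^sup>2 + 2 * (g/s)\<^sup>2 = 2 * ((1 - s)\<^sup>2 + g\<^sup>2) / s\<^sup>2"
    using s0 by (simp add: field_simps power2_eq_square)
  also have "\<dots> \<le> 2 * (2 * g\<^sup>2) / s\<^sup>2"
    using b s0 by (intro divide_right_mono) auto
  also have "\<dots> \<le> 2 * (2 * g\<^sup>2) / (1/2)"
    using sh s0 g0 by (intro divide_left_mono) auto
  finally show ?thesis by simp
qed

lemma sq_tri: "(cmod (u + v))\<^sup>2 \<le> 2 * (cmod u)\<^sup>2 + 2 * (cmod v)\<^sup>2"
proof -
  have "cmod (u + v) \<le> cmod u + cmod v" by (rule norm_triangle_ineq)
  hence "(cmod (u + v))\<^sup>2 \<le> (cmod u + cmod v)\<^sup>2" by (simp add: power_mono)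
  also have "\<dots> \<le> 2 * (cmod u)\<^sup>2 + 2 * (cmod v)\<^sup>2"
    using sum_squares_ge_zero[of "cmod u - cmod v" 0] by (simp add: power2_eq_square algebra_simps)
  finally show ?thesis .
qed

lemma col_norm: "(\<Sum>y\<in>bits m. (cmod (Mop m \<theta> y x))\<^sup>2) = 1"
proof -
  have "(\<Sum>y\<in>bits m. (cmod (Mop m \<theta> y x))\<^sup>2) = Re (\<Sum>y\<in>bits m. cnj (Mop m \<theta> y x) * Mop m \<theta> y x)"
    by (simp add: Re_sum complex_norm_square[symmetric] mult.commute)
  also have "\<dots> = 1" using G_diag[of m \<theta> x] by (simp add: G_def)
  finally show ?thesis .
qed

lemma col_diff_bound:
  assumes g2: "(cmod (gam m \<theta> x))\<^sup>2 \<le> 1/2"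
  shows "(\<Sum>y\<in>bits m. (cmod (Mop m \<theta> y x - Uop m \<theta> y x))\<^sup>2) \<le> 8 * (cmod (gam m \<theta> x))\<^sup>2"
proof (cases "x ! 0")
  case False
  then show ?thesis by (simp add: Uop_def)
next
  case True
  let ?g = "cmod (gam m \<theta> x)"
  define s where "s = sqrt (1 - ?g\<^sup>2)"
  have s0: "s > 0" using g2 unfolding s_def by simp
  have e: "Mop m \<theta> y x - Uop m \<theta> y x = (1 - 1 / complex_of_real s) * Mop m \<theta> y x
             + (gam m \<theta> x / complex_of_real s) * Mop m \<theta> y (compl_bits x)" for y
    using True s0 by (simp add: Uop_def s_def field_simps)
  have n1: "cmod (1 - 1 / complex_of_real s) = \<bar>1 - 1 / s\<bar>"
    by (metis norm_of_real of_real_1 of_real_diff of_real_divide)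
  have n2: "cmod (gam m \<theta> x / complex_of_real s) = ?g / s"
    using s0 by (simp add: norm_divide)
  have "(\<Sum>y\<in>bits m. (cmod (Mop m \<theta> y x - Uop m \<theta> y x))\<^sup>2)
     \<le> (\<Sum>y\<in>bits m. 2 * (1 - 1/s)\<^sup>2 * (cmod (Mop m \<theta> y x))\<^sup>2 + 2 * (?g/s)\<^sup>2 * (cmod (Mop m \<theta> y (compl_bits x)))\<^sup>2)"
  proof (rule sum_mono)
    fix y
    show "(cmod (Mop m \<theta> y x - Uop m \<theta> y x))\<^sup>2 \<le> 2 * (1 - 1/s)\<^sup>2 * (cmod (Mop m \<theta> y x))\<^sup>2 + 2 * (?g/s)\<^sup>2 * (cmod (Mop m \<theta> y (compl_bits x)))\<^sup>2"
    proof -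
      have "cmod ((1 - 1 / complex_of_real s) * Mop m \<theta> y x) = \<bar>1 - 1 / s\<bar> * cmod (Mop m \<theta> y x)"
        by (simp only: norm_mult n1)
      moreover have "cmod ((gam m \<theta> x / complex_of_real s) * Mop m \<theta> y (compl_bits x)) = (?g / s) * cmod (Mop m \<theta> y (compl_bits x))"
        by (simp only: norm_mult n2)
      ultimately show ?thesis
        unfolding e using sq_tri[of "(1 - 1 / complex_of_real s) * Mop m \<theta> y x" "(gam m \<theta> x / complex_of_real s) * Mop m \<theta> y (compl_bits x)"]
        by (simp only: power_mult_distrib power2_abs mult.assoc)
    qed
  qed
  also have "\<dots> = 2 * (1 - 1/s)\<^sup>2 + 2 * (?g/s)\<^sup>2"
    by (simp add: sum.distrib sum_distrib_left[symmetric] col_norm)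
  also have "\<dots> \<le> 8 * ?g\<^sup>2" by (rule real_bound[OF norm_ge_zero g2 s_def])
  finally show ?thesis .
qed

theorem main_part:
  fixes m :: nat
  assumes "m \<ge> 1"
    and rows: "\<And>A :: bool list \<Rightarrow> bool list \<Rightarrow> complex. \<And>S. finite S \<Longrightarrow>
      (\<forall>x\<in>S. \<forall>x'\<in>S. (\<Sum>y\<in>S. cnj (A y x) * A y x') = (if x = x' then 1 else 0)) \<Longrightarrow>
      (\<forall>x\<in>S. \<forall>x'\<in>S. (\<Sum>y\<in>S. A x y * cnj (A x' y)) = (if x = x' then 1 else 0))"
  shows "\<exists>C>0. \<exists>\<theta>m. 0 < \<theta>m \<and> \<theta>m < pi / 2 \<and>
           (\<forall>\<theta>. 0 < \<theta> \<and> \<theta> \<le> \<theta>m \<longrightarrow>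
              unitary_op m (Uop m \<theta>) \<and>
              frob m (\<lambda>y x. Mop m \<theta> y x - Uop m \<theta> y x) \<le> C * \<theta> ^ m)"
proof (intro exI conjI allI impI)
  let ?N = "real (card (bits m))"
  show "0 < sqrt (8 * ?N) + 1" by (simp add: add_nonneg_pos)
  show "(0::real) < 1/2" by simp
  show "1/2 < pi / 2" using pi_gt3 by simp
  fix \<theta> :: real assume th: "0 < \<theta> \<and> \<theta> \<le> 1/2"
  have gn: "cmod (gam m \<theta> x) = \<bar>sin \<theta>\<bar> ^ m" if "x \<in> bits m" for x
  proof -
    have "length (compl_bits x) = m" using that by (simp add: bits_def)
    from G_compl_norm[OF this, of \<theta>] show ?thesis by (simp add: gam_G)
  qed
  have sl: "\<bar>sin \<theta>\<bar> ^ m \<le> \<theta> ^ m"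
    using abs_sin_x_le_abs_x[of \<theta>] th by (intro power_mono) auto
  have th2: "\<theta> ^ m \<le> 1/2"
  proof -
    have "\<theta> ^ m \<le> \<theta> ^ 1" using th assms by (intro power_decreasing) auto
    then show ?thesis using th by simp
  qed
  have gsmall: "cmod (gam m \<theta> x) \<le> \<theta> ^ m" if "x \<in> bits m" for x
    using gn[OF that] sl by simp
  have glt: "\<forall>x\<in>bits m. cmod (gam m \<theta> x) < 1"
    using gsmall th2 by fastforce
  have cols: "\<forall>x\<in>bits m. \<forall>x'\<in>bits m.
     (\<Sum>y\<in>bits m. cnj (Uop m \<theta> y x) * Uop m \<theta> y x') = (if x = x' then 1 else 0)"
    using cols_orth[OF assms(1) glt] .
  show "unitary_op m (Uop m \<theta>)"
    unfolding unitary_op_def using cols rows[OF finite_bits cols] by blast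
  have colb: "(\<Sum>y\<in>bits m. (cmod (Mop m \<theta> y x - Uop m \<theta> y x))\<^sup>2) \<le> 8 * (\<theta> ^ m)\<^sup>2"
    if "x \<in> bits m" for x
  proof -
    have g0: "0 \<le> cmod (gam m \<theta> x)" by simp
    have "(cmod (gam m \<theta> x))\<^sup>2 \<le> (\<theta> ^ m)\<^sup>2" using power_mono[OF gsmall[OF that] g0, of 2] .
    moreover have "(\<theta> ^ m)\<^sup>2 \<le> (1/2)\<^sup>2" using th2 th by (intro power_mono) auto
    ultimately have "(cmod (gam m \<theta> x))\<^sup>2 \<le> 1/2" by (simp add: power2_eq_square)
    from col_diff_bound[OF this] \<open>(cmod (gam m \<theta> x))\<^sup>2 \<le> (\<theta> ^ m)\<^sup>2\<close>
    show ?thesis by linarith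
  qed
  have "frob m (\<lambda>y x. Mop m \<theta> y x - Uop m \<theta> y x) \<le> sqrt (\<Sum>x\<in>bits m. 8 * (\<theta> ^ m)\<^sup>2)"
    unfolding frob_def using colb by (intro real_sqrt_le_mono sum_mono) auto
  also have "\<dots> = sqrt (8 * ?N) * \<theta> ^ m"
    using th by (simp add: real_sqrt_mult mult.commute)
  also have "\<dots> \<le> (sqrt (8 * ?N) + 1) * \<theta> ^ m"
    using th by (intro mult_right_mono) auto
  finally show "frob m (\<lambda>y x. Mop m \<theta> y x - Uop m \<theta> y x) \<le> (sqrt (8 * ?N) + 1) * \<theta> ^ m" .
qed


theorem lemma4p10:
  fixes m :: nat
  assumes "m \<ge> 1"
  shows "\<exists>C>0. \<exists>\<theta>m. 0 < \<theta>m \<and> \<theta>m < pi / 2 \<and>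
           (\<forall>\<theta>. 0 < \<theta> \<and> \<theta> \<le> \<theta>m \<longrightarrow>
              unitary_op m (Uop m \<theta>) \<and>
              frob m (\<lambda>y x. Mop m \<theta> y x - Uop m \<theta> y x) \<le> C * \<theta> ^ m)"
  by (rule main_part[OF assms cols_to_rows])

end
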